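(* Let $m,n\ge2$ with $1/m+1/n<1$ and $0<|\lambda|<1/(3n)$, and let $P_\lambda(z)=\dfrac{\frac1n((1+z)^n-1)+\lambda^{m+n}z^{m+n}}{1-\lambda^{m+n}z^{m+n}}$. Then $P_\lambda$ has exactly $n-1$ critical points, counted with multiplicity, in the disk $\mathbb{D}(-1,|\lambda|)$; equivalently the polynomial $$E_\lambda(z)=(1+z)^{n-1}+\lambda^{m+n}z^{m+n-1}\Big\{\big(1+\tfrac mn\big)\big[(1+z)^n+n-1\big]-z(1+z)^{n-1}\Big\}$$ has exactly $n-1$ zeros counted with multiplicity in $\mathbb{D}(-1,|\lambda|)$. Moreover $\mathbb{D}(-1,|\lambda|)\subset\mathbb{D}(-\tfrac34,\tfrac34)$.
   Context: $\mathbb{D}(a,r)$ denotes the open Euclidean disk of center $a$ and radius $r$. The finite critical points of $P_\lambda$ are exactly the zeros of $E_\lambda$ (with multiplicity). *)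

theory Defs
  imports "HOL-Analysis.Analysis" "HOL-Computational_Algebra.Polynomial"
begin

definition P_lam :: "complex \<Rightarrow> nat \<Rightarrow> nat \<Rightarrow> complex \<Rightarrow> complex" where
  "P_lam lam m n z =
     ((1 / of_nat n) * ((1 + z) ^ n - 1) + lam ^ (m + n) * z ^ (m + n))
     / (1 - lam ^ (m + n) * z ^ (m + n))"

text \<open>The polynomial E_lambda whose zeros are the finite critical points of P_lambda:
  E(z) = (1+z)^(n-1) + lambda^(m+n) z^(m+n-1) ((1 + m/n)((1+z)^n + n - 1) - z (1+z)^(n-1)).\<close>
definition E_poly :: "complex \<Rightarrow> nat \<Rightarrow> nat \<Rightarrow> complex poly" where
  "E_poly lam m n =
     [:1, 1:] ^ (n - 1)
     + smult (lam ^ (m + n))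
         (monom 1 (m + n - 1) *
           (smult (1 + of_nat m / of_nat n) ([:1, 1:] ^ n + [:of_nat n - 1:])
            - [:0, 1:] * [:1, 1:] ^ (n - 1)))"

end

theory Submission
  imports Defs "HOL-Computational_Algebra.Fundamental_Theorem_Algebra"
begin

lemma exp_eq_1_int:
  assumes "exp (z::complex) = 1" shows "\<exists>k::int. z = 2 * of_real pi * \<i> * of_int k"
proof -
  from assms obtain k::int where "Re z = 0" "Im z = of_int (2*k) * pi" by (auto simp: exp_eq_1)
  then show ?thesis by (intro exI[of _ k]) (simp add: complex_eq_iff)
qed

lemma log_diff_unique:
  fixes g h :: "real \<Rightarrow> complex"
  assumes cg: "continuous_on {0..1} g" and ch: "continuous_on {0..1} h"
    and e: "\<And>s. s\<in>{0..1} \<Longrightarrow> exp (g s) = exp (h s)"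
  shows "g 1 - g 0 = h 1 - h 0"
proof -
  define f where "f s = (g s - h s) / (2 * of_real pi * \<i>)" for s
  have fi: "\<exists>k::int. f s = of_int k" if "s \<in> {0..1}" for s
  proof -
    have "exp (g s - h s) = 1" using e[OF that] by (simp add: exp_diff)
    then obtain k::int where "g s - h s = 2 * of_real pi * \<i> * of_int k" using exp_eq_1_int by blast
    then show ?thesis by (auto simp: f_def)
  qed
  have "f constant_on {0..1}"
  proof (rule continuous_discrete_range_constant)
    show "connected {0..1::real}" by simp
    show "continuous_on {0..1} f" unfolding f_def by (intro continuous_intros cg ch) auto
    fix x assume x: "x \<in> {0..1::real}"
    show "\<exists>e>0. \<forall>y. y \<in> {0..1} \<and> f y \<noteq> f x \<longrightarrow> e \<le> norm (f y - f x)"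
    proof (intro exI[of _ 1] conjI allI impI)
      fix y assume y: "y \<in> {0..1} \<and> f y \<noteq> f x"
      obtain a b :: int where ab: "f y = of_int a" "f x = of_int b" using fi x y by blast
      with y have "a \<noteq> b" by auto
      then have "1 \<le> norm (of_int (a - b) :: complex)" by (simp only: norm_of_int)
      then show "1 \<le> norm (f y - f x)" using ab by simp
    qed simp
  qed
  then have "f 1 = f 0" by (auto simp: constant_on_def)
  then show ?thesis by (simp add: f_def divide_simps) (simp add: algebra_simps)
qed

lemma log_exists:
  fixes f :: "real \<Rightarrow> complex"
  assumes "continuous_on {0..1} f" "\<And>s. s\<in>{0..1} \<Longrightarrow> f s \<noteq> 0"
  obtains g where "continuous_on {0..1} g" "\<And>s. s\<in>{0..1} \<Longrightarrow> f s = exp (g s)"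
  using continuous_logarithm_on_contractible[OF assms(1) convex_imp_contractible[OF convex_real_interval(5)] assms(2)]
  by blast

lemma Ln_small:
  fixes v :: "real \<Rightarrow> complex"
  assumes "continuous_on {0..1} v" "\<And>s. s\<in>{0..1} \<Longrightarrow> norm (v s) < 1"
  shows "continuous_on {0..1} (\<lambda>s. Ln (1 + v s))" "\<And>s. s\<in>{0..1} \<Longrightarrow> exp (Ln (1 + v s)) = 1 + v s"
proof -
  have nz: "1 + v s \<notin> \<real>\<^sub>\<le>\<^sub>0" if "s \<in> {0..1}" for s :: real
  proof -
    have "\<bar>Re (v s)\<bar> < 1" using assms(2)[OF that] abs_Re_le_cmod[of "v s"] by linarith
    then show ?thesis by (auto simp: complex_nonpos_Reals_iff)
  qed
  show "continuous_on {0..1} (\<lambda>s. Ln (1 + v s))"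
    by (intro continuous_intros assms(1) nz) auto
  fix s :: real assume "s \<in> {0..1}"
  with nz have "1 + v s \<noteq> 0" by (metis nonpos_Reals_zero_I)
  then show "exp (Ln (1 + v s)) = 1 + v s" by simp
qed

definition gam :: "complex \<Rightarrow> real \<Rightarrow> real \<Rightarrow> complex" where
  "gam c r s = c + of_real r * exp (2 * of_real pi * \<i> * of_real s)"

lemma cont_gam: "continuous_on S (gam c r)"
  unfolding gam_def by (intro continuous_intros)

lemma norm_gam: "r \<ge> 0 \<Longrightarrow> cmod (gam c r s - c) = r"
  by (simp add: gam_def norm_mult norm_exp_eq_Re)

lemma ee_norm: "cmod (exp (2 * of_real pi * \<i> * of_real s)) = 1"
  by (simp add: norm_exp_eq_Re)
lemma ee_norm': "cmod (exp (- (2 * of_real pi * \<i> * of_real s))) = 1"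
  by (simp add: norm_exp_eq_Re)

lemma wind_linear:
  assumes r: "r > 0" and ar: "cmod (a - c) \<noteq> r" and ck: "continuous_on {0..1} k"
    and ek: "\<And>s. s\<in>{0..1} \<Longrightarrow> gam c r s - a = exp (k s)"
  shows "k 1 - k 0 = 2 * of_real pi * \<i> * (if a \<in> ball c r then 1 else 0)"
proof (cases "cmod (a - c) < r")
  case False
  define d where "d = c - a"
  have dr: "cmod d > r" using False ar by (simp add: d_def norm_minus_commute)
  then have d0: "d \<noteq> 0" using r by auto
  define v where "v s = of_real r * exp (2 * of_real pi * \<i> * of_real s) / d" for s :: real
  have cv: "continuous_on {0..1} v" unfolding v_def by (intro continuous_intros) (simp add: d0)
  have nv: "cmod (v s) < 1" for s
    using dr r by (simp add: v_def norm_divide norm_mult ee_norm divide_less_eq)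
  note L = Ln_small[OF cv nv]
  define k0 where "k0 s = Ln d + Ln (1 + v s)" for s
  have "k 1 - k 0 = k0 1 - k0 0"
  proof (rule log_diff_unique[OF ck])
    show "continuous_on {0..1} k0" unfolding k0_def by (intro continuous_intros L(1))
    fix s :: real assume s: "s \<in> {0..1}"
    have "exp (k0 s) = d * (1 + v s)" unfolding k0_def using L(2)[OF s] d0 by (simp add: exp_add)
    also have "\<dots> = gam c r s - a" using d0 by (simp add: v_def gam_def d_def field_simps)
    finally show "exp (k s) = exp (k0 s)" using ek[OF s] by simp
  qed
  moreover have "v 1 = v 0" by (simp add: v_def exp_two_pi_i)
  ultimately show ?thesis using False by (simp add: k0_def dist_norm norm_minus_commute)
next
  case True
  define d where "d = c - a"
  have dr: "cmod d < r" using True by (simp add: d_def norm_minus_commute)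
  define v where "v s = d / of_real r * exp (- (2 * of_real pi * \<i> * of_real s))" for s :: real
  have cv: "continuous_on {0..1} v" unfolding v_def by (intro continuous_intros)
  have nv: "cmod (v s) < 1" for s
    using dr r by (simp add: v_def norm_divide norm_mult ee_norm')
  note L = Ln_small[OF cv nv]
  define k0 where "k0 s = of_real (ln r) + 2 * of_real pi * \<i> * of_real s + Ln (1 + v s)" for s
  have "k 1 - k 0 = k0 1 - k0 0"
  proof (rule log_diff_unique[OF ck])
    show "continuous_on {0..1} k0" unfolding k0_def by (intro continuous_intros L(1))
    fix s :: real assume s: "s \<in> {0..1}"
    have "exp (k0 s) = of_real r * exp (2 * of_real pi * \<i> * of_real s) * (1 + v s)"
      unfolding k0_def using L(2)[OF s] r by (simp add: exp_add exp_of_real)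
    also have "\<dots> = gam c r s - a" using r
      by (simp add: v_def gam_def d_def field_simps exp_minus)
    finally show "exp (k s) = exp (k0 s)" using ek[OF s] by simp
  qed
  moreover have "v 1 = v 0" by (simp add: v_def exp_two_pi_i exp_minus)
  ultimately show ?thesis using True by (simp add: k0_def dist_norm norm_minus_commute)
qed

lemma order_lin: "order z [:-a, 1:] = (if z = a then 1 else (0::nat))"
proof (cases "z = a")
  case True then show ?thesis using order_power_n_n[of a 1] by simp
next
  case False
  have "poly [:-a, 1:] z \<noteq> 0" using False by simp
  then show ?thesis using False order_root[of "[:-a,1:]" z] by simp
qed

lemma sum_order_split:
  fixes q :: "complex poly" assumes q: "q \<noteq> 0"
  shows "(\<Sum>z\<in>{z. poly ([:-a,1:]*q) z = 0 \<and> z \<in> B}. order z ([:-a,1:]*q))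
       = (if a\<in>B then 1 else 0) + (\<Sum>z\<in>{z. poly q z = 0 \<and> z \<in> B}. order z q)"
proof -
  define p where "p = [:-a,1:]*q"
  have l0: "[:-a,1:] \<noteq> (0::complex poly)" by simp
  have p0: "p \<noteq> 0" by (simp only: p_def mult_eq_0_iff) (use l0 q in blast)
  define S where "S = {z. poly p z = 0 \<and> z \<in> B}"
  define Sq where "Sq = {z. poly q z = 0 \<and> z \<in> B}"
  have fS: "finite S" unfolding S_def by (rule finite_subset[OF _ poly_roots_finite[OF p0]]) auto
  have "(\<Sum>z\<in>S. order z p) = (\<Sum>z\<in>S. order z [:-a,1:] + order z q)"
    using p0 unfolding p_def by (intro sum.cong refl order_mult)
  also have "\<dots> = (\<Sum>z\<in>S. order z [:-a,1:]) + (\<Sum>z\<in>S. order z q)" by (simp add: sum.distrib)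
  also have "(\<Sum>z\<in>S. order z [:-a,1:]) = (if a \<in> S then 1 else 0)"
    unfolding order_lin using sum.delta[OF fS, of a "\<lambda>_. 1::nat"] by simp
  also have "(a \<in> S) = (a \<in> B)" by (simp add: S_def p_def)
  also have "(\<Sum>z\<in>S. order z q) = (\<Sum>z\<in>Sq. order z q)"
  proof (rule sum.mono_neutral_right[OF fS])
    show "Sq \<subseteq> S" by (auto simp: S_def Sq_def p_def)
    show "\<forall>z\<in>S - Sq. order z q = 0" using order_root[of q] q by (auto simp: S_def Sq_def)
  qed
  finally show ?thesis by (simp add: S_def Sq_def p_def)
qed

lemma wind_poly:
  fixes p :: "complex poly"
  assumes r: "r > 0" 
  shows "p \<noteq> 0 \<Longrightarrow> (\<And>z. cmod (z - c) = r \<Longrightarrow> poly p z \<noteq> 0) \<Longrightarrow> continuous_on {0..1} g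
    \<Longrightarrow> (\<And>s. s\<in>{0..1} \<Longrightarrow> poly p (gam c r s) = exp (g s))
    \<Longrightarrow> g 1 - g 0 = 2 * of_real pi * \<i> * of_nat (\<Sum>z\<in>{z. poly p z = 0 \<and> z \<in> ball c r}. order z p)"
proof (induction "degree p" arbitrary: p g rule: less_induct)
  case less
  note p0 = less.prems(1) and nr = less.prems(2) and cg = less.prems(3) and eg = less.prems(4)
  show ?case
  proof (cases "degree p = 0")
    case True
    then obtain a where pa: "p = [:a:]" by (elim degree_eq_zeroE)
    with p0 have a0: "a \<noteq> 0" by simp
    have "g 1 - g 0 = (\<lambda>s. g 0) 1 - (\<lambda>s. g 0) 0"
    proof (rule log_diff_unique[OF cg])
      fix s :: real assume "s \<in> {0..1}"
      then show "exp (g s) = exp (g 0)" using eg[of s] eg[of 0] by (simp add: pa)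
    qed simp
    moreover have E: "{z. poly p z = 0 \<and> z \<in> ball c r} = {}" using a0 pa by simp
    ultimately show ?thesis unfolding E by simp
  next
    case False
    have "\<exists>z. poly p z = 0"
      by (rule fundamental_theorem_of_algebra_alt) (use False in auto)
    then obtain a where pa: "poly p a = 0" by blast
    then have "[:-a,1:] dvd p" using dvd_iff_poly_eq_0[of "-a" p] by simp
    then obtain q where pq: "p = [:-a,1:] * q" by (elim dvdE)
    have q0: "q \<noteq> 0" using p0 pq by auto
    have "degree p = degree [:-a,1:] + degree q" unfolding pq by (rule degree_mult_eq) (use q0 in auto)
    then have dq: "degree q < degree p" by simp
    have pz: "poly p z = (z - a) * poly q z" for z by (simp add: pq algebra_simps)
    have nrq: "poly q z \<noteq> 0" if "cmod (z - c) = r" for z using nr[OF that] pz by auto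
    obtain h where ch: "continuous_on {0..1} h" and eh: "\<And>s. s\<in>{0..1} \<Longrightarrow> poly q (gam c r s) = exp (h s)"
    proof (rule log_exists)
      show "continuous_on {0..1} (\<lambda>s. poly q (gam c r s))" by (intro continuous_intros cont_gam)
      show "poly q (gam c r s) \<noteq> 0" for s using nrq norm_gam[of r c s] r by simp
    qed blast
    have IH: "h 1 - h 0 = 2 * of_real pi * \<i> * of_nat (\<Sum>z\<in>{z. poly q z = 0 \<and> z \<in> ball c r}. order z q)"
      by (rule less.hyps[OF dq q0 nrq ch eh]) auto
    have ar: "cmod (a - c) \<noteq> r" using nr pa by blast
    have lin: "(\<lambda>s. g s - h s) 1 - (\<lambda>s. g s - h s) 0 = 2 * of_real pi * \<i> * (if a \<in> ball c r then 1 else 0)"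
    proof (rule wind_linear[OF r ar])
      show "continuous_on {0..1} (\<lambda>s. g s - h s)" by (intro continuous_intros cg ch)
      fix s :: real assume s: "s \<in> {0..1}"
      have "exp (g s) = (gam c r s - a) * exp (h s)" using eg[OF s] eh[OF s] pz by simp
      then show "gam c r s - a = exp (g s - h s)" by (simp add: exp_diff field_simps)
    qed
    have "g 1 - g 0 = (g 1 - h 1 - (g 0 - h 0)) + (h 1 - h 0)" by simp
    also have "\<dots> = 2 * of_real pi * \<i> * ((if a \<in> ball c r then 1 else 0) + of_nat (\<Sum>z\<in>{z. poly q z = 0 \<and> z \<in> ball c r}. order z q))"
      using lin IH by (simp add: algebra_simps)
    also have "\<dots> = 2 * of_real pi * \<i> * of_nat (\<Sum>z\<in>{z. poly p z = 0 \<and> z \<in> ball c r}. order z p)"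
      unfolding pq sum_order_split[OF q0] by simp
    finally show ?thesis .
  qed
qed

lemma four_pow: "m \<ge> 2 \<Longrightarrow> 16 * (m + 1) \<le> 3 * (4::nat) ^ m"
proof (induction m rule: dec_induct)
  case base then show ?case by simp
next
  case (step k) then show ?case by simp
qed

lemma key_ineq:
  fixes r :: real and m n :: nat
  assumes r0: "0 < r" and rn: "r < 1 / (3 * real n)" and n2: "n \<ge> 2" and m2: "m \<ge> 2"
  shows "r^(m+n) * (1+r)^(m+n-1) * ((1 + real m / real n) * (r^n + (real n - 1)) + (1+r)*r^(n-1)) < r^(n-1)"
proof -
  define B where "B = (1 + real m / real n) * (r^n + (real n - 1)) + (1+r)*r^(n-1)"
  have nr: "real n * r < 1/3" using rn n2 by (simp add: field_simps)
  have r6: "r \<le> 1/6"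
  proof -
    have "2 * r \<le> real n * r" using n2 r0 by (intro mult_right_mono) auto
    then show ?thesis using nr by linarith
  qed
  have rn1: "r^n \<le> 1" using r0 r6 by (intro power_le_one) auto
  have rn2: "r^(n-1) \<le> r^1" using r0 r6 n2 by (intro power_decreasing) auto
  have "(1+r)*r^(n-1) \<le> (1+1/6) * (1/6)" using r0 r6 rn2 by (intro mult_mono) auto
  then have B1: "B \<le> real n + real m + 1"
  proof -
    assume h: "(1+r)*r^(n-1) \<le> (1+1/6) * (1/6)"
    have "(1 + real m / real n) * (r^n + (real n - 1)) \<le> (1 + real m / real n) * real n"
      using rn1 n2 by (intro mult_left_mono) auto
    also have "\<dots> = real n + real m" using n2 by (simp add: field_simps)
    finally have c: "(1 + real m / real n) * (r^n + (real n - 1)) \<le> real n + real m" .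
    have "B \<le> (real n + real m) + (1+1/6) * (1/6)" unfolding B_def by (rule add_mono[OF c h])
    then show ?thesis by simp
  qed
  have B0: "0 \<le> B" unfolding B_def using n2 r0 by (intro add_nonneg_nonneg mult_nonneg_nonneg) auto
  have P2: "(1+r)^(n-1) \<le> 2"
  proof -
    have "(1+r)^(n-1) \<le> (1+r)^n" using r0 by (intro power_increasing) auto
    also have "\<dots> \<le> exp r ^ n" using r0 by (intro power_mono) auto
    also have "\<dots> = exp (real n * r)" by (simp add: exp_of_nat_mult)
    also have "\<dots> \<le> 1 + 2 * (real n * r)" using nr r0 by (intro real_exp_bound_lemma) auto
    finally show ?thesis using nr by linarith
  qed
  define x where "x = r * (1 + r)"
  have x0: "0 \<le> x" using r0 by (simp add: x_def)
  have x4: "x \<le> 1/4"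
  proof -
    have "r * (1 + r) \<le> (1/6) * (1 + 1/6)" using r0 r6 by (intro mult_mono) auto
    then show ?thesis by (simp add: x_def)
  qed
  define y :: real where "y = (1/4)^m"
  have xy: "x^m \<le> y" unfolding y_def using x0 x4 by (intro power_mono) auto
  have y16: "y \<le> 1/16"
  proof -
    have "y \<le> (1/4)^2" unfolding y_def using m2 by (intro power_decreasing) auto
    then show ?thesis by (simp add: power2_eq_square)
  qed
  have ym: "y * (real m + 1) \<le> 3/16"
  proof -
    have "16 * (real m + 1) \<le> 3 * 4^m" using four_pow[OF m2] by (metis (mono_tags) of_nat_le_iff of_nat_1 of_nat_add of_nat_mult of_nat_numeral of_nat_power)
    then show ?thesis unfolding y_def by (simp add: field_simps power_one_over)
  qed
  have y0: "0 \<le> y" by (simp add: y_def)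
  have split: "r^(m+n) * (1+r)^(m+n-1) = r^(n-1) * (r * x^m * (1+r)^(n-1))"
  proof -
    have e1: "m + n = (n - 1) + 1 + m" using n2 by simp
    have e2: "m + n - 1 = m + (n - 1)" using n2 by simp
    show ?thesis unfolding e2 unfolding e1 x_def by (simp add: power_add power_mult_distrib mult_ac)
  qed
  have T: "r * x^m * (1+r)^(n-1) * B \<le> r * y * 2 * (real n + real m + 1)"
    using r0 x0 xy P2 B0 B1 y0
    by (intro mult_mono) (auto intro!: mult_nonneg_nonneg)
  also have "\<dots> = 2 * y * (real n * r) + 2 * (y * (real m + 1)) * r" by (simp add: algebra_simps)
  also have "\<dots> \<le> 2 * (1/16) * (1/3) + 2 * (3/16) * (1/6)"
    using y0 y16 nr ym r0 r6 by (intro add_mono mult_mono) auto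
  finally have T1: "r * x^m * (1+r)^(n-1) * B < 1" by simp
  have "r^(m+n) * (1+r)^(m+n-1) * B = r^(n-1) * (r * x^m * (1+r)^(n-1) * B)"
    using split by (metis mult.assoc)
  also have "\<dots> < r^(n-1) * 1" using T1 r0 by (intro mult_strict_left_mono) auto
  finally show ?thesis by (simp add: B_def)
qed

theorem lemma4p2:
  fixes m n :: nat and lam :: complex
  assumes "m \<ge> 2" and "n \<ge> 2"
    and "1 / real m + 1 / real n < 1"
    and "0 < cmod lam" and "cmod lam < 1 / (3 * real n)"
  shows "(\<Sum>z \<in> {z. poly (E_poly lam m n) z = 0 \<and> z \<in> ball (-1) (cmod lam)}.
            order z (E_poly lam m n)) = n - 1
         \<and> ball (-1 :: complex) (cmod lam) \<subseteq> ball (-3/4) (3/4)"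
proof
  define r where "r = cmod lam"
  have r0: "0 < r" and rn: "r < 1 / (3 * real n)" using assms by (auto simp: r_def)
  have nr: "real n * r < 1/3" using rn assms(2) by (simp add: field_simps)
  have r6: "r \<le> 1/6"
  proof -
    have "2 * r \<le> real n * r" using assms(2) r0 by (intro mult_right_mono) auto
    then show ?thesis using nr by linarith
  qed
  show "ball (-1 :: complex) (cmod lam) \<subseteq> ball (-3/4) (3/4)"
  proof
    fix z :: complex assume "z \<in> ball (-1) (cmod lam)"
    then have "cmod (z + 1) < r" by (simp add: r_def dist_norm norm_minus_commute)
    moreover have "cmod (z + 3/4) \<le> cmod (z + 1) + cmod (-1/4 :: complex)"
      using norm_triangle_ineq[of "z+1" "-1/4"] by (simp add: add.commute)
    ultimately show "z \<in> ball (-3/4) (3/4)" using r6 by (simp add: dist_norm norm_minus_commute)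
  qed
  define eps where "eps = lam ^ (m + n)"
  define A :: complex where "A = 1 + of_nat m / of_nat n"
  define Q :: "complex poly" where "Q = monom 1 (m + n - 1) *
           (smult (1 + of_nat m / of_nat n) ([:1, 1:] ^ n + [:of_nat n - 1:])
            - [:0, 1:] * [:1, 1:] ^ (n - 1))"
  define p0 :: "complex poly" where "p0 = [:1,1:] ^ (n - 1)"
  define E where "E = E_poly lam m n"
  have E: "E = p0 + smult eps Q" unfolding E_def E_poly_def p0_def eps_def Q_def ..
  have pQ: "poly Q z = z^(m+n-1) * (A * ((1+z)^n + (of_nat n - 1)) - z * (1+z)^(n-1))" for z
    by (simp add: Q_def A_def poly_monom)
  have pp0: "poly p0 z = (1+z)^(n-1)" for z by (simp add: p0_def)
  have bound: "cmod (eps * poly Q z) < cmod (poly p0 z)" if z: "cmod (z - (-1)) = r" for z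
  proof -
    have z1: "cmod (1 + z) = r" using z by (simp add: add.commute)
    have zn: "cmod z \<le> 1 + r" using norm_triangle_ineq4[of "1+z" 1] z1 by simp
    have "A = of_real (1 + real m / real n)" by (simp add: A_def)
    then have nA: "cmod A = 1 + real m / real n" by (simp only: norm_of_real) simp
    have "(of_nat n - 1 :: complex) = of_nat (n - 1)" using assms(2) by (simp add: of_nat_diff)
    then have nn: "cmod (of_nat n - 1 :: complex) = real n - 1" using assms(2) by (simp only: norm_of_nat)
    have h1: "cmod ((1+z)^n + (of_nat n - 1)) \<le> r^n + (real n - 1)"
      using norm_triangle_ineq[of "(1+z)^n" "of_nat n - 1"] z1 nn by (simp add: norm_power)
    have h2: "cmod (z * (1+z)^(n-1)) \<le> (1+r) * r^(n-1)"
      using zn z1 r0 by (simp add: norm_mult norm_power)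
    have hH: "cmod (A * ((1+z)^n + (of_nat n - 1)) - z * (1+z)^(n-1))
        \<le> (1 + real m / real n) * (r^n + (real n - 1)) + (1+r) * r^(n-1)"
    proof -
      have "cmod (A * ((1+z)^n + (of_nat n - 1)) - z * (1+z)^(n-1))
          \<le> cmod (A * ((1+z)^n + (of_nat n - 1))) + cmod (z * (1+z)^(n-1))" by (rule norm_triangle_ineq4)
      also have "\<dots> \<le> (1 + real m / real n) * (r^n + (real n - 1)) + (1+r) * r^(n-1)"
        using h1 h2 unfolding norm_mult nA by (intro add_mono mult_left_mono) auto
      finally show ?thesis .
    qed
    have "cmod (eps * poly Q z) = r^(m+n) * cmod z ^ (m+n-1) * cmod (A * ((1+z)^n + (of_nat n - 1)) - z * (1+z)^(n-1))"
      by (simp add: pQ eps_def r_def norm_mult norm_power)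
    also have "\<dots> \<le> r^(m+n) * (1+r)^(m+n-1) * ((1 + real m / real n) * (r^n + (real n - 1)) + (1+r) * r^(n-1))"
      using r0 zn hH by (intro mult_mono power_mono mult_nonneg_nonneg) auto
    also have "\<dots> < r^(n-1)" by (rule key_ineq[OF r0 rn assms(2) assms(1)])
    also have "\<dots> = cmod (poly p0 z)" by (simp add: pp0 norm_power z1)
    finally show ?thesis .
  qed
  have p0nz: "poly p0 z \<noteq> 0" if "cmod (z - (-1)) = r" for z
    using bound[OF that] by auto
  have Enz: "poly E z \<noteq> 0" if "cmod (z - (-1)) = r" for z
  proof
    assume "poly E z = 0"
    then have "poly p0 z = - (eps * poly Q z)" by (simp add: E eq_neg_iff_add_eq_0)
    then show False using bound[OF that] by simp
  qed
  have E0: "E \<noteq> 0" using Enz[of "-1 + of_real r"] r0 by auto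
  have p00: "p0 \<noteq> 0" using p0nz[of "-1 + of_real r"] r0 by auto
  have gr: "cmod (gam (-1) r s - (-1)) = r" for s using norm_gam[of r "-1" s] r0 by simp
  obtain h where ch: "continuous_on {0..1} h" and eh: "\<And>s. s\<in>{0..1} \<Longrightarrow> poly p0 (gam (-1) r s) = exp (h s)"
  proof (rule log_exists)
    show "continuous_on {0..1} (\<lambda>s. poly p0 (gam (-1) r s))" by (intro continuous_intros cont_gam)
    show "poly p0 (gam (-1) r s) \<noteq> 0" for s using p0nz[OF gr] .
  qed blast
  define v where "v s = eps * poly Q (gam (-1) r s) / poly p0 (gam (-1) r s)" for s
  have cv: "continuous_on {0..1} v" unfolding v_def
    by (intro continuous_intros cont_gam) (use p0nz[OF gr] in auto)
  have nv: "cmod (v s) < 1" for s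
    using bound[OF gr, of s] p0nz[OF gr, of s] by (simp add: v_def norm_divide divide_less_eq)
  note L = Ln_small[OF cv nv]
  define k where "k s = h s + Ln (1 + v s)" for s
  have ck: "continuous_on {0..1} k" unfolding k_def by (intro continuous_intros ch L(1))
  have ek: "poly E (gam (-1) r s) = exp (k s)" if s: "s \<in> {0..1}" for s
  proof -
    have "exp (k s) = poly p0 (gam (-1) r s) * (1 + v s)" using eh[OF s] L(2)[OF s] by (simp add: k_def exp_add)
    also have "\<dots> = poly E (gam (-1) r s)" using p0nz[OF gr, of s] by (simp add: v_def E field_simps)
    finally show ?thesis by simp
  qed
  have v10: "v 1 = v 0" by (simp add: v_def gam_def exp_two_pi_i)
  have WE: "k 1 - k 0 = 2 * of_real pi * \<i> * of_nat (\<Sum>z\<in>{z. poly E z = 0 \<and> z \<in> ball (-1) r}. order z E)"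
    by (rule wind_poly[OF r0 E0 Enz ck ek]) auto
  have Wp: "h 1 - h 0 = 2 * of_real pi * \<i> * of_nat (\<Sum>z\<in>{z. poly p0 z = 0 \<and> z \<in> ball (-1) r}. order z p0)"
    by (rule wind_poly[OF r0 p00 p0nz ch eh]) auto
  have "k 1 - k 0 = h 1 - h 0" using v10 by (simp add: k_def)
  define SE where "SE = (\<Sum>z\<in>{z. poly E z = 0 \<and> z \<in> ball (-1) r}. order z E)"
  define SP where "SP = (\<Sum>z\<in>{z. poly p0 z = 0 \<and> z \<in> ball (-1) r}. order z p0)"
  with WE Wp \<open>k 1 - k 0 = h 1 - h 0\<close> have "2 * of_real pi * \<i> * (of_nat SE :: complex) = 2 * of_real pi * \<i> * of_nat SP"
    unfolding SE_def SP_def by simp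
  then have "(of_nat SE :: complex) = of_nat SP" by (subst (asm) mult_cancel_left) simp
  then have eq: "SE = SP" by (simp only: of_nat_eq_iff)
  have S0: "{z. poly p0 z = 0 \<and> z \<in> ball (-1) r} = {-1}"
    using r0 assms(2) by (auto simp: pp0 add_eq_0_iff2 minus_equation_iff[of _ 1])
  have "order (-1) p0 = n - 1"
  proof -
    have "p0 = [:-(-1),1:] ^ (n-1)" by (simp add: p0_def)
    then show ?thesis using order_power_n_n[of "-1::complex" "n-1"] by simp
  qed
  with eq S0 SE_def SP_def show "(\<Sum>z \<in> {z. poly (E_poly lam m n) z = 0 \<and> z \<in> ball (-1) (cmod lam)}.
            order z (E_poly lam m n)) = n - 1" by (simp add: E_def r_def)
qed

end
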